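(* Let $M_I$ and $N_J$ be factor systems with limits $M$ and $N$ respectively, and assume Condition (D). Then $[M\to_{\mathcal F}N]$ is a limit of $[M_I\to N_J]$. Equivalently, there is an isomorphism $[\mathrm{elem}(M_I)\to_{\mathcal F}\mathrm{elem}(N_J)]\simeq\mathrm{elem}([M_I\to N_J])$.
   Context: For every non-empty directed preordered set $I$ a family $\mathcal F(I)$ of subsets is fixed, each cofinal, closed under supersets and finite intersections, containing all non-empty upward closed subsets. Condition (D): for all such $I,J$, $H\in\mathcal F(I\times J)$ and $I'\in\mathcal F(I)$ imply $\{j\mid\exists i\in I',(i,j)\in H\}\in\mathcal F(J)$. System $(M_I,\triangleright)$: pairwise disjoint sets $M_i$ with relations $\triangleright\subseteq M_{i'}\times M_i$ ($i\le i'$), reflexive for $i=i'$; $a_i\approx b_j$ iff some $c\in M_{i'}$, $i'\ge i,j$, has $c\triangleright a_i,c\triangleright b_j$; prefactor: $a_{i'}\approx a_i\iff a_{i'}\triangleright a_i$. Factor system: prefactor system with $\approx$-preserving $emb_{i,i'}:M_i\to M_{i'}$, $proj_{i',i}:M_{i'}\to M_i$ with $emb_{i,i}(a)\approx a$, $proj_{i,i}(a)\approx a$, $emb_{i',i''}\circ emb_{i,i'}(a)\approx emb_{i,i''}(a)$, $proj_{i',i}\circ proj_{i'',i'}(a)\approx proj_{i'',i}(a)$, $proj_{i',i}(emb_{i,i'}(a))\approx a$, and $a_{i'}\triangleright a_i\Rightarrow emb_{i',i''}(a_{i'})\triangleright a_i$, $a_{i''}\triangleright a_i\Rightarrow proj_{i'',i'}(a_{i''})\triangleright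 a_i$ ($i\le i'\le i''$). Function space $[M_I\to N_J]$: indices $i\to j\in I\times J$ (product order), states = $\approx$-preserving functions $M_i\to N_j$, $f'\triangleright f$ iff $a_{i'}\triangleright a_i\Rightarrow f'(a_{i'})\triangleright f(a_i)$, embeddings $f\mapsto emb_{j,j'}\circ f\circ proj_{i',i}$, projections $f'\mapsto proj_{j',j}\circ f'\circ emb_{i,i'}$. A target for $M_I$: a set $M$ with a relation $a\triangleright a_i$ ($a\in M$, $a_i\in M_i$) such that $I_a:=\{i\mid\exists a_i,a\triangleright a_i\}\in\mathcal F(I)$ and $a\triangleright a_{i'}$, $a\triangleright a_i$ imply $a_{i'}\triangleright a_i$ (for factor systems also with maps $Emb_i:M_i\to M$, $Proj_i:M\to M_i$ extending the structure). A limit of $M_I$ is a target $M$ such that for every target $N'$ there is a unique map $\Phi:N'\to M$ with $b\triangleright a_i\Rightarrow\Phi(b)\triangleright a_i$; limits are unique up to isomorphism. A consistent set is $\alpha\subseteq\bigcup_iM_i$ whose elements are pairwise related by $\triangleright$ (higher stage to lower) with $\{i\mid\alpha\cap M_i\ne\emptyset\}\in\mathcal F(I)$; $\mathrm{elem}(M_I)$ is the set of inclusion-maximal consistent sets, which with the relation $\alpha\triangleright a_i\iff a_i\in\alpha$ is a limit of $M_I$. For targets $M,N$: $[M\to_{\mathcal F}N]:=\{f:M\to N\mid I_f\in\mathcal F(I\times J)\}$ with $f\triangleright f_{i\to j}$ iff for all $a\in M$, $a_i\in M_i$ with $a\triangleright a_i$, $f(a)\triangleright f_{i\to j}(a_i)$,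 and $I_f:=\{i\to j\mid\exists f_{i\to j},f\triangleright f_{i\to j}\}$. *)

theory Defs
  imports Main "HOL-Library.FuncSet"
begin

definition directed_preorder :: "'i set \<Rightarrow> ('i \<Rightarrow> 'i \<Rightarrow> bool) \<Rightarrow> bool" where
  "directed_preorder I le \<longleftrightarrow>
     I \<noteq> {} \<and>
     (\<forall>i\<in>I. le i i) \<and>
     (\<forall>i\<in>I. \<forall>j\<in>I. \<forall>k\<in>I. le i j \<longrightarrow> le j k \<longrightarrow> le i k) \<and>
     (\<forall>i\<in>I. \<forall>j\<in>I. \<exists>k\<in>I. le i k \<and> le j k)"

definition upward_closed :: "'i set \<Rightarrow> ('i \<Rightarrow> 'i \<Rightarrow> bool) \<Rightarrow> 'i set \<Rightarrow> bool" where
  "upward_closed I le X \<longleftrightarrow> X \<subseteq> I \<and> (\<forall>i\<in>X. \<forall>i'\<in>I. le i i' \<longrightarrow> i' \<in> X)"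

definition cofinal :: "'i set \<Rightarrow> ('i \<Rightarrow> 'i \<Rightarrow> bool) \<Rightarrow> 'i set \<Rightarrow> bool" where
  "cofinal I le X \<longleftrightarrow> X \<subseteq> I \<and> (\<forall>i\<in>I. \<exists>k\<in>X. le i k)"

definition filter_family :: "'i set \<Rightarrow> ('i \<Rightarrow> 'i \<Rightarrow> bool) \<Rightarrow> 'i set set \<Rightarrow> bool" where
  "filter_family I le F \<longleftrightarrow>
     (\<forall>X\<in>F. cofinal I le X) \<and>
     (\<forall>X\<in>F. \<forall>Y. X \<subseteq> Y \<and> Y \<subseteq> I \<longrightarrow> Y \<in> F) \<and>
     (\<forall>X\<in>F. \<forall>Y\<in>F. X \<inter> Y \<in> F) \<and>
     (\<forall>X. X \<noteq> {} \<and> upward_closed I le X \<longrightarrow> X \<in> F)"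

text \<open>Product order on I \<times> J (indices i \<rightarrow> j of the function space).\<close>
definition prod_le :: "('i \<Rightarrow> 'i \<Rightarrow> bool) \<Rightarrow> ('j \<Rightarrow> 'j \<Rightarrow> bool) \<Rightarrow> 'i \<times> 'j \<Rightarrow> 'i \<times> 'j \<Rightarrow> bool" where
  "prod_le leI leJ p q \<longleftrightarrow> leI (fst p) (fst q) \<and> leJ (snd p) (snd q)"

definition condition_D :: "'i set \<Rightarrow> 'j set \<Rightarrow> 'i set set \<Rightarrow> 'j set set \<Rightarrow> ('i \<times> 'j) set set \<Rightarrow> bool" where
  "condition_D I J FI FJ FIJ \<longleftrightarrow>
     (\<forall>H\<in>FIJ. \<forall>I'\<in>FI. {j \<in> J. \<exists>i\<in>I'. (i, j) \<in> H} \<in> FJ)"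

text \<open>A system (M_I, \<triangleright>): stage sets Ms i (i \<in> I) and one relation tr on states;
  tr a' a stands for a' \<triangleright> a with a' in a higher stage than a.\<close>
definition is_system :: "'i set \<Rightarrow> ('i \<Rightarrow> 'i \<Rightarrow> bool) \<Rightarrow> ('i \<Rightarrow> 'a set) \<Rightarrow> ('a \<Rightarrow> 'a \<Rightarrow> bool) \<Rightarrow> bool" where
  "is_system I le Ms tr \<longleftrightarrow>
     (\<forall>i\<in>I. \<forall>j\<in>I. i \<noteq> j \<longrightarrow> Ms i \<inter> Ms j = {}) \<and>
     (\<forall>a' a. tr a' a \<longrightarrow> (\<exists>i\<in>I. \<exists>i'\<in>I. le i i' \<and> a' \<in> Ms i' \<and> a \<in> Ms i)) \<and>
     (\<forall>i\<in>I. \<forall>a\<in>Ms i. tr a a)"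

definition sys_approx :: "'i set \<Rightarrow> ('i \<Rightarrow> 'i \<Rightarrow> bool) \<Rightarrow> ('i \<Rightarrow> 'a set) \<Rightarrow> ('a \<Rightarrow> 'a \<Rightarrow> bool) \<Rightarrow> 'a \<Rightarrow> 'a \<Rightarrow> bool" where
  "sys_approx I le Ms tr a b \<longleftrightarrow>
     (\<exists>i\<in>I. \<exists>j\<in>I. \<exists>i'\<in>I. a \<in> Ms i \<and> b \<in> Ms j \<and> le i i' \<and> le j i' \<and>
        (\<exists>c\<in>Ms i'. tr c a \<and> tr c b))"

definition prefactor_system :: "'i set \<Rightarrow> ('i \<Rightarrow> 'i \<Rightarrow> bool) \<Rightarrow> ('i \<Rightarrow> 'a set) \<Rightarrow> ('a \<Rightarrow> 'a \<Rightarrow> bool) \<Rightarrow> bool" where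
  "prefactor_system I le Ms tr \<longleftrightarrow>
     is_system I le Ms tr \<and>
     (\<forall>i\<in>I. \<forall>i'\<in>I. le i i' \<longrightarrow>
        (\<forall>a'\<in>Ms i'. \<forall>a\<in>Ms i. sys_approx I le Ms tr a' a \<longleftrightarrow> tr a' a))"

definition approx_preserving ::
  "'i set \<Rightarrow> ('i \<Rightarrow> 'i \<Rightarrow> bool) \<Rightarrow> ('i \<Rightarrow> 'a set) \<Rightarrow> ('a \<Rightarrow> 'a \<Rightarrow> bool) \<Rightarrow>
   'j set \<Rightarrow> ('j \<Rightarrow> 'j \<Rightarrow> bool) \<Rightarrow> ('j \<Rightarrow> 'b set) \<Rightarrow> ('b \<Rightarrow> 'b \<Rightarrow> bool) \<Rightarrow>
   'i \<Rightarrow> 'j \<Rightarrow> ('a \<Rightarrow> 'b) \<Rightarrow> bool" where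
  "approx_preserving I leI Ms trM J leJ Ns trN i j f \<longleftrightarrow>
     (\<forall>a\<in>Ms i. f a \<in> Ns j) \<and>
     (\<forall>a\<in>Ms i. \<forall>b\<in>Ms i. sys_approx I leI Ms trM a b \<longrightarrow> sys_approx J leJ Ns trN (f a) (f b))"

definition factor_system ::
  "'i set \<Rightarrow> ('i \<Rightarrow> 'i \<Rightarrow> bool) \<Rightarrow> ('i \<Rightarrow> 'a set) \<Rightarrow> ('a \<Rightarrow> 'a \<Rightarrow> bool) \<Rightarrow>
   ('i \<Rightarrow> 'i \<Rightarrow> 'a \<Rightarrow> 'a) \<Rightarrow> ('i \<Rightarrow> 'i \<Rightarrow> 'a \<Rightarrow> 'a) \<Rightarrow> bool" where
  "factor_system I le Ms tr emb proj \<longleftrightarrow>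
     prefactor_system I le Ms tr \<and>
     (\<forall>i\<in>I. \<forall>i'\<in>I. le i i' \<longrightarrow>
        approx_preserving I le Ms tr I le Ms tr i i' (emb i i') \<and>
        approx_preserving I le Ms tr I le Ms tr i' i (proj i' i)) \<and>
     (\<forall>i\<in>I. \<forall>a\<in>Ms i. sys_approx I le Ms tr (emb i i a) a \<and> sys_approx I le Ms tr (proj i i a) a) \<and>
     (\<forall>i\<in>I. \<forall>i'\<in>I. \<forall>i''\<in>I. le i i' \<longrightarrow> le i' i'' \<longrightarrow>
        (\<forall>a\<in>Ms i. sys_approx I le Ms tr (emb i' i'' (emb i i' a)) (emb i i'' a)) \<and>
        (\<forall>a\<in>Ms i''. sys_approx I le Ms tr (proj i' i (proj i'' i' a)) (proj i'' i a)) \<and>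
        (\<forall>a'\<in>Ms i'. \<forall>a\<in>Ms i. tr a' a \<longrightarrow> tr (emb i' i'' a') a) \<and>
        (\<forall>a''\<in>Ms i''. \<forall>a\<in>Ms i. tr a'' a \<longrightarrow> tr (proj i'' i' a'') a)) \<and>
     (\<forall>i\<in>I. \<forall>i'\<in>I. le i i' \<longrightarrow>
        (\<forall>a\<in>Ms i. sys_approx I le Ms tr (proj i' i (emb i i' a)) a))"

text \<open>States at index i \<rightarrow> j are tagged by their index (so that stages are disjoint) and are
  \<approx>-preserving maps Ms i \<rightarrow> Ns j, taken extensional (undefined outside Ms i).\<close>
definition fs_states ::
  "'i set \<Rightarrow> ('i \<Rightarrow> 'i \<Rightarrow> bool) \<Rightarrow> ('i \<Rightarrow> 'a set) \<Rightarrow> ('a \<Rightarrow> 'a \<Rightarrow> bool) \<Rightarrow>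
   'j set \<Rightarrow> ('j \<Rightarrow> 'j \<Rightarrow> bool) \<Rightarrow> ('j \<Rightarrow> 'b set) \<Rightarrow> ('b \<Rightarrow> 'b \<Rightarrow> bool) \<Rightarrow>
   'i \<times> 'j \<Rightarrow> (('i \<times> 'j) \<times> ('a \<Rightarrow> 'b)) set" where
  "fs_states I leI Ms trM J leJ Ns trN p =
     {(p, f) | f. f \<in> extensional (Ms (fst p)) \<and>
        approx_preserving I leI Ms trM J leJ Ns trN (fst p) (snd p) f}"

definition fs_tr ::
  "'i set \<Rightarrow> ('i \<Rightarrow> 'i \<Rightarrow> bool) \<Rightarrow> ('i \<Rightarrow> 'a set) \<Rightarrow> ('a \<Rightarrow> 'a \<Rightarrow> bool) \<Rightarrow>
   'j set \<Rightarrow> ('j \<Rightarrow> 'j \<Rightarrow> bool) \<Rightarrow> ('j \<Rightarrow> 'b set) \<Rightarrow> ('b \<Rightarrow> 'b \<Rightarrow> bool) \<Rightarrow>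
   ('i \<times> 'j) \<times> ('a \<Rightarrow> 'b) \<Rightarrow> ('i \<times> 'j) \<times> ('a \<Rightarrow> 'b) \<Rightarrow> bool" where
  "fs_tr I leI Ms trM J leJ Ns trN F' F \<longleftrightarrow>
     fst F' \<in> I \<times> J \<and> fst F \<in> I \<times> J \<and> prod_le leI leJ (fst F) (fst F') \<and>
     F' \<in> fs_states I leI Ms trM J leJ Ns trN (fst F') \<and>
     F \<in> fs_states I leI Ms trM J leJ Ns trN (fst F) \<and>
     (\<forall>a'\<in>Ms (fst (fst F')). \<forall>a\<in>Ms (fst (fst F)).
        trM a' a \<longrightarrow> trN (snd F' a') (snd F a))"

text \<open>A target (T, R) of the system: R t a means t \<triangleright> a.\<close>
definition is_target ::
  "'i set \<Rightarrow> ('i \<Rightarrow> 'i \<Rightarrow> bool) \<Rightarrow> 'i set set \<Rightarrow> ('i \<Rightarrow> 'a set) \<Rightarrow> ('a \<Rightarrow> 'a \<Rightarrow> bool) \<Rightarrow>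
   't set \<Rightarrow> ('t \<Rightarrow> 'a \<Rightarrow> bool) \<Rightarrow> bool" where
  "is_target I le F Ms tr T R \<longleftrightarrow>
     (\<forall>t\<in>T. {i \<in> I. \<exists>a\<in>Ms i. R t a} \<in> F) \<and>
     (\<forall>t\<in>T. \<forall>i\<in>I. \<forall>i'\<in>I. le i i' \<longrightarrow>
        (\<forall>a'\<in>Ms i'. \<forall>a\<in>Ms i. R t a' \<longrightarrow> R t a \<longrightarrow> tr a' a))"

text \<open>(T, R) is a limit with respect to all targets whose carrier has type 'c.\<close>
definition is_limit ::
  "'c itself \<Rightarrow> 'i set \<Rightarrow> ('i \<Rightarrow> 'i \<Rightarrow> bool) \<Rightarrow> 'i set set \<Rightarrow> ('i \<Rightarrow> 'a set) \<Rightarrow> ('a \<Rightarrow> 'a \<Rightarrow> bool) \<Rightarrow>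
   't set \<Rightarrow> ('t \<Rightarrow> 'a \<Rightarrow> bool) \<Rightarrow> bool" where
  "is_limit _ I le F Ms tr T R \<longleftrightarrow>
     is_target I le F Ms tr T R \<and>
     (\<forall>(T' :: 'c set) R'. is_target I le F Ms tr T' R' \<longrightarrow>
        (\<exists>!\<Phi>. \<Phi> \<in> T' \<rightarrow>\<^sub>E T \<and>
            (\<forall>b\<in>T'. \<forall>i\<in>I. \<forall>a\<in>Ms i. R' b a \<longrightarrow> R (\<Phi> b) a)))"

definition funF_rel ::
  "'i set \<Rightarrow> ('i \<Rightarrow> 'i \<Rightarrow> bool) \<Rightarrow> ('i \<Rightarrow> 'a set) \<Rightarrow> ('a \<Rightarrow> 'a \<Rightarrow> bool) \<Rightarrow>
   'j set \<Rightarrow> ('j \<Rightarrow> 'j \<Rightarrow> bool) \<Rightarrow> ('j \<Rightarrow> 'b set) \<Rightarrow> ('b \<Rightarrow> 'b \<Rightarrow> bool) \<Rightarrow>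
   'm set \<Rightarrow> ('m \<Rightarrow> 'a \<Rightarrow> bool) \<Rightarrow> ('n \<Rightarrow> 'b \<Rightarrow> bool) \<Rightarrow>
   ('m \<Rightarrow> 'n) \<Rightarrow> ('i \<times> 'j) \<times> ('a \<Rightarrow> 'b) \<Rightarrow> bool" where
  "funF_rel I leI Ms trM J leJ Ns trN TM RM RN f G \<longleftrightarrow>
     fst G \<in> I \<times> J \<and> G \<in> fs_states I leI Ms trM J leJ Ns trN (fst G) \<and>
     (\<forall>a\<in>TM. \<forall>ai\<in>Ms (fst (fst G)). RM a ai \<longrightarrow> RN (f a) (snd G ai))"

definition funF_index ::
  "'i set \<Rightarrow> ('i \<Rightarrow> 'i \<Rightarrow> bool) \<Rightarrow> ('i \<Rightarrow> 'a set) \<Rightarrow> ('a \<Rightarrow> 'a \<Rightarrow> bool) \<Rightarrow>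
   'j set \<Rightarrow> ('j \<Rightarrow> 'j \<Rightarrow> bool) \<Rightarrow> ('j \<Rightarrow> 'b set) \<Rightarrow> ('b \<Rightarrow> 'b \<Rightarrow> bool) \<Rightarrow>
   'm set \<Rightarrow> ('m \<Rightarrow> 'a \<Rightarrow> bool) \<Rightarrow> ('n \<Rightarrow> 'b \<Rightarrow> bool) \<Rightarrow>
   ('m \<Rightarrow> 'n) \<Rightarrow> ('i \<times> 'j) set" where
  "funF_index I leI Ms trM J leJ Ns trN TM RM RN f =
     {p \<in> I \<times> J. \<exists>G\<in>fs_states I leI Ms trM J leJ Ns trN p.
                   funF_rel I leI Ms trM J leJ Ns trN TM RM RN f G}"

definition funF ::
  "'i set \<Rightarrow> ('i \<Rightarrow> 'i \<Rightarrow> bool) \<Rightarrow> ('i \<Rightarrow> 'a set) \<Rightarrow> ('a \<Rightarrow> 'a \<Rightarrow> bool) \<Rightarrow>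
   'j set \<Rightarrow> ('j \<Rightarrow> 'j \<Rightarrow> bool) \<Rightarrow> ('j \<Rightarrow> 'b set) \<Rightarrow> ('b \<Rightarrow> 'b \<Rightarrow> bool) \<Rightarrow>
   ('i \<times> 'j) set set \<Rightarrow>
   'm set \<Rightarrow> ('m \<Rightarrow> 'a \<Rightarrow> bool) \<Rightarrow> 'n set \<Rightarrow> ('n \<Rightarrow> 'b \<Rightarrow> bool) \<Rightarrow> ('m \<Rightarrow> 'n) set" where
  "funF I leI Ms trM J leJ Ns trN FIJ TM RM TN RN =
     {f. f \<in> TM \<rightarrow>\<^sub>E TN \<and> funF_index I leI Ms trM J leJ Ns trN TM RM RN f \<in> FIJ}"

end

theory Submission
  imports Defs
begin
lemma ff_super: "filter_family I le F \<Longrightarrow> X \<in> F \<Longrightarrow> X \<subseteq> Y \<Longrightarrow> Y \<subseteq> I \<Longrightarrow> Y \<in> F"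
  unfolding filter_family_def by blast

lemma ff_int: "filter_family I le F \<Longrightarrow> X \<in> F \<Longrightarrow> Y \<in> F \<Longrightarrow> X \<inter> Y \<in> F"
  unfolding filter_family_def by blast

lemma ff_up: "filter_family I le F \<Longrightarrow> X \<noteq> {} \<Longrightarrow> upward_closed I le X \<Longrightarrow> X \<in> F"
  unfolding filter_family_def by blast

lemma ff_nonempty:
  assumes "filter_family I le F" "I \<noteq> {}" "X \<in> F" shows "\<exists>x. x \<in> X"
proof -
  have "cofinal I le X" using assms(1,3) unfolding filter_family_def by (elim conjE) (erule bspec)
  hence c: "\<forall>i\<in>I. \<exists>k\<in>X. le i k" unfolding cofinal_def by (rule conjunct2)
  obtain i where "i \<in> I" using assms(2) by blast
  with c show ?thesis by (elim ballE bexE) auto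
qed

lemma sys_approx_sym: "sys_approx I le Ms tr a b \<Longrightarrow> sys_approx I le Ms tr b a"
  unfolding sys_approx_def by blast

lemma fs_pf: "factor_system I le Ms tr emb proj \<Longrightarrow> prefactor_system I le Ms tr"
  unfolding factor_system_def by (rule conjunct1)

lemma pf_sys: "prefactor_system I le Ms tr \<Longrightarrow> is_system I le Ms tr"
  unfolding prefactor_system_def by blast

lemma pf_iff: "prefactor_system I le Ms tr \<Longrightarrow> i \<in> I \<Longrightarrow> i' \<in> I \<Longrightarrow> le i i' \<Longrightarrow>
   a' \<in> Ms i' \<Longrightarrow> a \<in> Ms i \<Longrightarrow> sys_approx I le Ms tr a' a \<longleftrightarrow> tr a' a"
  unfolding prefactor_system_def by blast

lemma sys_refl: "is_system I le Ms tr \<Longrightarrow> i \<in> I \<Longrightarrow> a \<in> Ms i \<Longrightarrow> tr a a"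
  unfolding is_system_def by blast

lemma sys_disj: "is_system I le Ms tr \<Longrightarrow> i \<in> I \<Longrightarrow> j \<in> I \<Longrightarrow> a \<in> Ms i \<Longrightarrow> a \<in> Ms j \<Longrightarrow> i = j"
  unfolding is_system_def by blast

lemma pf_symm:
  assumes "prefactor_system I le Ms tr" "k \<in> I" "l \<in> I" "le l k" "le k l" "x \<in> Ms k" "y \<in> Ms l" "tr x y"
  shows "tr y x"
proof -
  have "sys_approx I le Ms tr x y" using pf_iff[OF assms(1,3,2,4,6,7)] assms(8) by blast
  hence "sys_approx I le Ms tr y x" by (rule sys_approx_sym)
  thus ?thesis using pf_iff[OF assms(1,2,3,5,7,6)] by blast
qed

lemma fs_emb_in:
  assumes fs: "factor_system I le Ms tr emb proj" and h: "i \<in> I" "i' \<in> I" "le i i'" "a \<in> Ms i"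
  shows "emb i i' a \<in> Ms i'"
proof -
  note C = fs[unfolded factor_system_def, THEN conjunct2, THEN conjunct1]
  note D = C[rule_format, OF h(1,2,3), THEN conjunct1, unfolded approx_preserving_def, THEN conjunct1]
  show ?thesis using D h(4) by blast
qed

lemma fs_emb_comp:
  assumes fs: "factor_system I le Ms tr emb proj" and h: "i \<in> I" "i' \<in> I" "i'' \<in> I"
   "le i i'" "le i' i''" "a \<in> Ms i"
  shows "sys_approx I le Ms tr (emb i' i'' (emb i i' a)) (emb i i'' a)"
proof -
  note C = fs[unfolded factor_system_def, THEN conjunct2, THEN conjunct2, THEN conjunct2, THEN conjunct1]
  note D = C[rule_format, OF h(1,2,3,4,5), THEN conjunct1]
  show ?thesis using D h(6) by blast
qed

lemma fs_emb_tr: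
  assumes fs: "factor_system I le Ms tr emb proj" and h: "i \<in> I" "i' \<in> I" "i'' \<in> I"
   "le i i'" "le i' i''" "a' \<in> Ms i'" "a \<in> Ms i" "tr a' a"
  shows "tr (emb i' i'' a') a"
proof -
  note C = fs[unfolded factor_system_def, THEN conjunct2, THEN conjunct2, THEN conjunct2, THEN conjunct1]
  note D = C[rule_format, OF h(1,2,3,4,5), THEN conjunct2, THEN conjunct2, THEN conjunct1]
  show ?thesis using D h(6,7,8) by blast
qed

lemma dp_trans: "directed_preorder I le \<Longrightarrow> i \<in> I \<Longrightarrow> j \<in> I \<Longrightarrow> k \<in> I \<Longrightarrow> le i j \<Longrightarrow> le j k \<Longrightarrow> le i k"
  unfolding directed_preorder_def by blast

lemma dp_refl: "directed_preorder I le \<Longrightarrow> i \<in> I \<Longrightarrow> le i i"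
  unfolding directed_preorder_def by blast

lemma dp_ne: "directed_preorder I le \<Longrightarrow> I \<noteq> {}"
  unfolding directed_preorder_def by blast

lemma dp_dir: "directed_preorder I le \<Longrightarrow> i \<in> I \<Longrightarrow> j \<in> I \<Longrightarrow> \<exists>k\<in>I. le i k \<and> le j k"
  unfolding directed_preorder_def by blast

lemma limit_target: "is_limit X I le F Ms tr T R \<Longrightarrow> is_target I le F Ms tr T R"
  unfolding is_limit_def by (rule conjunct1)

lemma target_coh: "is_target I le F Ms tr T R \<Longrightarrow> t \<in> T \<Longrightarrow> i \<in> I \<Longrightarrow> i' \<in> I \<Longrightarrow> le i i' \<Longrightarrow>
   a' \<in> Ms i' \<Longrightarrow> a \<in> Ms i \<Longrightarrow> R t a' \<Longrightarrow> R t a \<Longrightarrow> tr a' a"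
  unfolding is_target_def by blast

lemma target_idx: "is_target I le F Ms tr T R \<Longrightarrow> t \<in> T \<Longrightarrow> {i \<in> I. \<exists>a\<in>Ms i. R t a} \<in> F"
  unfolding is_target_def by blast

lemma limit_point:
  fixes S :: "'x set"
  assumes lim: "is_limit TYPE('x set) I le F Ms tr T R"
    and tg: "is_target I le F Ms tr {S} (\<lambda>S x. x \<in> S)"
  shows "\<exists>!t. t \<in> T \<and> (\<forall>i\<in>I. \<forall>a\<in>Ms i. a \<in> S \<longrightarrow> R t a)"
proof -
  define Q where "Q \<Phi> \<longleftrightarrow> \<Phi> \<in> {S} \<rightarrow>\<^sub>E T \<and> (\<forall>b\<in>{S}. \<forall>i\<in>I. \<forall>a\<in>Ms i. a \<in> b \<longrightarrow> R (\<Phi> b) a)"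
    for \<Phi> :: "'x set \<Rightarrow> _"
  have L: "\<forall>(T' :: 'x set set) R'. is_target I le F Ms tr T' R' \<longrightarrow>
        (\<exists>!\<Phi>. \<Phi> \<in> T' \<rightarrow>\<^sub>E T \<and> (\<forall>b\<in>T'. \<forall>i\<in>I. \<forall>a\<in>Ms i. R' b a \<longrightarrow> R (\<Phi> b) a))"
    using lim unfolding is_limit_def by (rule conjunct2)
  have E: "\<exists>!\<Phi>. Q \<Phi>" unfolding Q_def using L[rule_format, OF tg] by simp
  then obtain \<Phi> where P: "Q \<Phi>" and U: "\<And>\<Psi>. Q \<Psi> \<Longrightarrow> \<Psi> = \<Phi>" by (elim ex1E) blast
  have P1: "\<Phi> \<in> {S} \<rightarrow>\<^sub>E T" and P2: "\<forall>i\<in>I. \<forall>a\<in>Ms i. a \<in> S \<longrightarrow> R (\<Phi> S) a"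
    using P unfolding Q_def by simp_all
  show ?thesis
  proof (rule ex1I[of _ "\<Phi> S"])
    show "\<Phi> S \<in> T \<and> (\<forall>i\<in>I. \<forall>a\<in>Ms i. a \<in> S \<longrightarrow> R (\<Phi> S) a)"
      using P1 P2 by (simp add: PiE_iff)
  next
    fix t assume t: "t \<in> T \<and> (\<forall>i\<in>I. \<forall>a\<in>Ms i. a \<in> S \<longrightarrow> R t a)"
    have "Q (\<lambda>b\<in>{S}. t)" unfolding Q_def using t by (simp add: PiE_iff)
    hence "(\<lambda>b\<in>{S}. t) = \<Phi>" by (rule U)
    hence "(\<lambda>b\<in>{S}. t) S = \<Phi> S" by simp
    thus "t = \<Phi> S" by simp
  qed
qed

lemma key:
  fixes Ms :: "'i \<Rightarrow> 'a set"
  assumes dp: "directed_preorder I le" and ff: "filter_family I le F"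
    and fs: "factor_system I le Ms tr emb proj"
    and lim: "is_limit TYPE('a set) I le F Ms tr T R"
    and ii: "i \<in> I" "i' \<in> I" "le i i'" and aa: "a' \<in> Ms i'" "a \<in> Ms i" "tr a' a"
  shows "\<exists>m\<in>T. R m a' \<and> R m a"
proof -
  have pf: "prefactor_system I le Ms tr" using fs by (rule fs_pf)
  have sy: "is_system I le Ms tr" using pf by (rule pf_sys)
  define e where "e k = emb i' k a'" for k
  have e_in: "e k \<in> Ms k" if "k \<in> I" "le i' k" for k
    unfolding e_def using fs_emb_in[OF fs ii(2) that(1) that(2) aa(1)] .
  have e_a': "tr (e k) a'" if "k \<in> I" "le i' k" for k
    unfolding e_def by (rule fs_emb_tr[OF fs ii(2) ii(2) that(1) dp_refl[OF dp ii(2)] that(2) aa(1) aa(1)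
      sys_refl[OF sy ii(2) aa(1)]])
  have e_a: "tr (e k) a" if "k \<in> I" "le i' k" for k
    unfolding e_def by (rule fs_emb_tr[OF fs ii(1) ii(2) that(1) ii(3) that(2) aa(1) aa(2) aa(3)])
  have e_e: "tr (e k2) (e k1)" if "k1 \<in> I" "k2 \<in> I" "le i' k1" "le k1 k2" for k1 k2
  proof -
    have ik2: "le i' k2" using dp_trans[OF dp ii(2) that(1,2) that(3,4)] .
    define c where "c = emb k1 k2 (e k1)"
    have c_in: "c \<in> Ms k2" unfolding c_def by (rule fs_emb_in[OF fs that(1,2,4) e_in[OF that(1,3)]])
    have c1: "tr c (e k1)" unfolding c_def
      by (rule fs_emb_tr[OF fs that(1) that(1) that(2) dp_refl[OF dp that(1)] that(4) e_in[OF that(1,3)]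
          e_in[OF that(1,3)] sys_refl[OF sy that(1) e_in[OF that(1,3)]]])
    have "sys_approx I le Ms tr c (e k2)" unfolding c_def e_def
      by (rule fs_emb_comp[OF fs ii(2) that(1,2,3,4) aa(1)])
    hence c2: "tr c (e k2)"
      using pf_iff[OF pf that(2) that(2) dp_refl[OF dp that(2)] c_in e_in[OF that(2) ik2]] by blast
    have "sys_approx I le Ms tr (e k2) (e k1)"
      unfolding sys_approx_def using that(1,2,4) dp_refl[OF dp that(2)] c_in c1 c2 e_in[OF that(1,3)]
        e_in[OF that(2) ik2] by blast
    thus ?thesis using pf_iff[OF pf that(1,2,4) e_in[OF that(2) ik2] e_in[OF that(1,3)]] by blast
  qed
  define S where "S = {a, a'} \<union> {e k | k. k \<in> I \<and> le i' k}"
  have tg: "is_target I le F Ms tr {S} (\<lambda>S x. x \<in> S)"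
    unfolding is_target_def
  proof (intro conjI ballI impI allI)
    have "{k \<in> I. le i' k} \<in> F"
      apply (rule ff_up[OF ff])
      using ii(2) dp_refl[OF dp ii(2)] apply blast
      unfolding upward_closed_def using dp_trans[OF dp] ii(2) by blast
    moreover have "{k \<in> I. le i' k} \<subseteq> {k \<in> I. \<exists>x\<in>Ms k. x \<in> S}"
      unfolding S_def using e_in by blast
    ultimately show "{k \<in> I. \<exists>x\<in>Ms k. x \<in> t} \<in> F" if "t \<in> {S}" for t
      using that ff_super[OF ff] by (metis (no_types, lifting) mem_Collect_eq singletonD subsetI)
  next
    fix t k k2 x y
    assume t: "t \<in> {S}" and k: "k \<in> I" "k2 \<in> I" "le k k2" and x: "x \<in> Ms k2" "y \<in> Ms k"
      and xy: "x \<in> t" "y \<in> t"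
    have xS: "x \<in> S" and yS: "y \<in> S" using t xy by auto
    note disj = sys_disj[OF sy]
    note symm = pf_symm[OF pf]
    note tr = dp_trans[OF dp]
    show "tr x y"
    proof -
      { assume "x = a"
        hence k2: "k2 = i" using disj[OF k(2) ii(1) x(1)] aa by blast
        { assume "y = a" hence ?thesis using sys_refl[OF sy ii(1) aa(2)] \<open>x = a\<close> by simp }
        moreover
        { assume "y = a'" hence "k = i'" using disj[OF k(1) ii(2) x(2)] aa by blast
          hence ?thesis using symm[OF ii(2) ii(1) ii(3)] k k2 aa \<open>x = a\<close> \<open>y = a'\<close> by blast }
        moreover
        { fix m assume m: "y = e m" "m \<in> I" "le i' m"
          hence "k = m" using disj[OF k(1) m(2) x(2)] e_in by blast
          hence ?thesis using symm[OF m(2) ii(1) _ _ e_in[OF m(2,3)] aa(2) e_a[OF m(2,3)]]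
              k k2 m \<open>x = a\<close> tr[OF ii(1) ii(2) m(2) ii(3) m(3)] by blast }
        ultimately have ?thesis using yS unfolding S_def by blast }
      moreover
      { assume "x = a'"
        hence k2: "k2 = i'" using disj[OF k(2) ii(2) x(1)] aa by blast
        { assume "y = a" hence "k = i" using disj[OF k(1) ii(1) x(2)] aa by blast
          hence ?thesis using aa \<open>x = a'\<close> \<open>y = a\<close> by blast }
        moreover
        { assume "y = a'" hence ?thesis using sys_refl[OF sy ii(2) aa(1)] \<open>x = a'\<close> by simp }
        moreover
        { fix m assume m: "y = e m" "m \<in> I" "le i' m"
          hence "k = m" using disj[OF k(1) m(2) x(2)] e_in by blast
          hence ?thesis using symm[OF m(2) ii(2) m(3) _ e_in[OF m(2,3)] aa(1) e_a'[OF m(2,3)]]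
              k k2 m \<open>x = a'\<close> by blast }
        ultimately have ?thesis using yS unfolding S_def by blast }
      moreover
      { fix n assume n: "x = e n" "n \<in> I" "le i' n"
        hence k2: "k2 = n" using disj[OF k(2) n(2) x(1)] e_in by blast
        { assume "y = a" hence ?thesis using e_a[OF n(2,3)] n by simp }
        moreover
        { assume "y = a'" hence ?thesis using e_a'[OF n(2,3)] n by simp }
        moreover
        { fix m assume m: "y = e m" "m \<in> I" "le i' m"
          hence "k = m" using disj[OF k(1) m(2) x(2)] e_in by blast
          hence ?thesis using e_e[OF m(2) n(2) m(3)] k k2 m n by blast }
        ultimately have ?thesis using yS unfolding S_def by blast }
      ultimately show ?thesis using xS unfolding S_def by blast
    qed
  qed
  from limit_point[OF lim tg] obtain m where m: "m \<in> T" "\<forall>k\<in>I. \<forall>x\<in>Ms k. x \<in> S \<longrightarrow> R m x"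
    by blast
  show ?thesis using m ii aa unfolding S_def by blast
qed

lemma fs_states_iff:
  "G \<in> fs_states I leI Ms trM J leJ Ns trN p \<longleftrightarrow>
   fst G = p \<and> snd G \<in> extensional (Ms (fst p)) \<and>
   approx_preserving I leI Ms trM J leJ Ns trN (fst p) (snd p) (snd G)"
  by (cases G) (auto simp: fs_states_def)

lemma ap_in: "approx_preserving I leI Ms trM J leJ Ns trN i j f \<Longrightarrow> a \<in> Ms i \<Longrightarrow> f a \<in> Ns j"
  unfolding approx_preserving_def by blast

theorem corollary2p15:
  fixes I :: "'i set" and leI :: "'i \<Rightarrow> 'i \<Rightarrow> bool" and FI :: "'i set set"
    and J :: "'j set" and leJ :: "'j \<Rightarrow> 'j \<Rightarrow> bool" and FJ :: "'j set set"
    and FIJ :: "('i \<times> 'j) set set"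
    and Ms :: "'i \<Rightarrow> 'a set" and trM :: "'a \<Rightarrow> 'a \<Rightarrow> bool"
    and embM :: "'i \<Rightarrow> 'i \<Rightarrow> 'a \<Rightarrow> 'a" and projM :: "'i \<Rightarrow> 'i \<Rightarrow> 'a \<Rightarrow> 'a"
    and Ns :: "'j \<Rightarrow> 'b set" and trN :: "'b \<Rightarrow> 'b \<Rightarrow> bool"
    and embN :: "'j \<Rightarrow> 'j \<Rightarrow> 'b \<Rightarrow> 'b" and projN :: "'j \<Rightarrow> 'j \<Rightarrow> 'b \<Rightarrow> 'b"
    and TM :: "'m set" and RM :: "'m \<Rightarrow> 'a \<Rightarrow> bool"
    and TN :: "'n set" and RN :: "'n \<Rightarrow> 'b \<Rightarrow> bool"
  assumes "directed_preorder I leI" and "directed_preorder J leJ"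
    and "filter_family I leI FI" and "filter_family J leJ FJ"
    and "filter_family (I \<times> J) (prod_le leI leJ) FIJ"
    and "condition_D I J FI FJ FIJ"
    and "factor_system I leI Ms trM embM projM"
    and "factor_system J leJ Ns trN embN projN"
    and "is_limit TYPE('a set) I leI FI Ms trM TM RM"
    and "is_limit TYPE('b set) J leJ FJ Ns trN TN RN"
  shows "is_limit TYPE('c) (I \<times> J) (prod_le leI leJ) FIJ
           (fs_states I leI Ms trM J leJ Ns trN) (fs_tr I leI Ms trM J leJ Ns trN)
           (funF I leI Ms trM J leJ Ns trN FIJ TM RM TN RN)
           (funF_rel I leI Ms trM J leJ Ns trN TM RM RN)"
proof -
  note dpI = assms(1) and dpJ = assms(2) and ffI = assms(3) and ffJ = assms(4) and ffIJ = assms(5)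
    and D = assms(6) and fsM = assms(7) and fsN = assms(8) and limM = assms(9) and limN = assms(10)
  let ?FS = "fs_states I leI Ms trM J leJ Ns trN"
  let ?FT = "fs_tr I leI Ms trM J leJ Ns trN"
  let ?FF = "funF I leI Ms trM J leJ Ns trN FIJ TM RM TN RN"
  let ?FR = "funF_rel I leI Ms trM J leJ Ns trN TM RM RN"
  let ?le = "prod_le leI leJ"
  have tgM: "is_target I leI FI Ms trM TM RM" using limM by (rule limit_target)
  have tgN: "is_target J leJ FJ Ns trN TN RN" using limN by (rule limit_target)
  have pfN: "prefactor_system J leJ Ns trN" using fsN by (rule fs_pf)
  have syN: "is_system J leJ Ns trN" using pfN by (rule pf_sys)
  have part1: "is_target (I \<times> J) ?le FIJ ?FS ?FT ?FF ?FR"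
    unfolding is_target_def
  proof (intro conjI ballI impI)
    fix f assume "f \<in> ?FF"
    thus "{p \<in> I \<times> J. \<exists>a\<in>?FS p. ?FR f a} \<in> FIJ" by (simp add: funF_def funF_index_def)
  next
    fix f p p' G' G
    assume f: "f \<in> ?FF" and p: "p \<in> I \<times> J" "p' \<in> I \<times> J" "?le p p'"
      and G: "G' \<in> ?FS p'" "G \<in> ?FS p" and R: "?FR f G'" "?FR f G"
    have fPi: "f \<in> TM \<rightarrow>\<^sub>E TN" using f by (simp add: funF_def)
    have G'': "fst G' = p'" "approx_preserving I leI Ms trM J leJ Ns trN (fst p') (snd p') (snd G')"
      "fst G = p" "approx_preserving I leI Ms trM J leJ Ns trN (fst p) (snd p) (snd G)"
      using G by (auto simp: fs_states_iff)
    show "?FT G' G"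
      unfolding fs_tr_def
    proof (intro conjI ballI impI)
      show "fst G' \<in> I \<times> J" "fst G \<in> I \<times> J" "?le (fst G) (fst G')"
        "G' \<in> ?FS (fst G')" "G \<in> ?FS (fst G)" using G'' p G by auto
    next
      fix a' a assume a: "a' \<in> Ms (fst (fst G'))" "a \<in> Ms (fst (fst G))" "trM a' a"
      have le: "leI (fst p) (fst p')" "leJ (snd p) (snd p')" using p(3) by (auto simp: prod_le_def)
      obtain m where m: "m \<in> TM" "RM m a'" "RM m a"
        using key[OF dpI ffI fsM limM _ _ le(1) _ _ a(3)] p a G'' by (auto simp: mem_Times_iff)
      have "RN (f m) (snd G' a')" "RN (f m) (snd G a)"
        using R m a unfolding funF_rel_def by auto
      moreover have "f m \<in> TN" using fPi m by auto
      ultimately show "trN (snd G' a') (snd G a)"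
        using target_coh[OF tgN _ _ _ le(2) ap_in[OF G''(2)] ap_in[OF G''(4)]] p a G''
        by (auto simp: mem_Times_iff)
    qed
  qed
  show ?thesis
    unfolding is_limit_def
  proof (intro conjI allI impI)
    show "is_target (I \<times> J) ?le FIJ ?FS ?FT ?FF ?FR" by (rule part1)
  next
    fix T' :: "'c set" and R'
    assume tg: "is_target (I \<times> J) ?le FIJ ?FS ?FT T' R'"
    define S where "S b m = {y. \<exists>G ai. fst G \<in> I \<times> J \<and> G \<in> ?FS (fst G) \<and> R' b G \<and>
        ai \<in> Ms (fst (fst G)) \<and> RM m ai \<and> y = snd G ai}" for b m
    have Stg: "is_target J leJ FJ Ns trN {S b m} (\<lambda>S x. x \<in> S)" if b: "b \<in> T'" and m: "m \<in> TM" for b m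
    proof -
      have Ib: "{p \<in> I \<times> J. \<exists>G\<in>?FS p. R' b G} \<in> FIJ" using target_idx[OF tg b] .
      have Im: "{i \<in> I. \<exists>a\<in>Ms i. RM m a} \<in> FI" using target_idx[OF tgM m] .
      show ?thesis unfolding is_target_def
      proof (intro conjI ballI impI)
        fix t assume t: "t \<in> {S b m}"
        have "{j \<in> J. \<exists>i\<in>{i \<in> I. \<exists>a\<in>Ms i. RM m a}. (i, j) \<in> {p \<in> I \<times> J. \<exists>G\<in>?FS p. R' b G}} \<in> FJ"
          using D Ib Im unfolding condition_D_def by blast
        moreover have "{j \<in> J. \<exists>i\<in>{i \<in> I. \<exists>a\<in>Ms i. RM m a}. (i, j) \<in> {p \<in> I \<times> J. \<exists>G\<in>?FS p. R' b G}}
            \<subseteq> {j \<in> J. \<exists>a\<in>Ns j. a \<in> S b m}"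
        proof safe
          fix j i ai G assume j: "j \<in> J" "i \<in> I" "ai \<in> Ms i" "RM m ai" "G \<in> ?FS (i, j)" "R' b G"
          have G: "fst G = (i, j)" "approx_preserving I leI Ms trM J leJ Ns trN i j (snd G)"
            using j(5) by (auto simp: fs_states_iff)
          show "\<exists>a\<in>Ns j. a \<in> S b m"
          proof
            show "snd G ai \<in> Ns j" using ap_in[OF G(2) j(3)] .
            show "snd G ai \<in> S b m" unfolding S_def
              by (rule CollectI, rule exI[of _ G], rule exI[of _ ai]) (use j G in auto)
          qed
        qed
        ultimately show "{j \<in> J. \<exists>a\<in>Ns j. a \<in> t} \<in> FJ" using t ff_super[OF ffJ] by blast
      next
        fix t j j2 y2 y
        assume t: "t \<in> {S b m}" and j: "j \<in> J" "j2 \<in> J" "leJ j j2" and y: "y2 \<in> Ns j2" "y \<in> Ns j"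
          and yt: "y2 \<in> t" "y \<in> t"
        have "y2 \<in> S b m" using yt(1) t by simp
        hence "\<exists>G ai. fst G \<in> I \<times> J \<and> G \<in> ?FS (fst G) \<and> R' b G \<and>
          ai \<in> Ms (fst (fst G)) \<and> RM m ai \<and> y2 = snd G ai" by (simp only: S_def mem_Collect_eq)
        then obtain G2 a2 where G2: "fst G2 \<in> I \<times> J" "G2 \<in> ?FS (fst G2)" "R' b G2"
          "a2 \<in> Ms (fst (fst G2))" "RM m a2" "y2 = snd G2 a2"
          by (elim exE conjE) auto
        have "y \<in> S b m" using yt(2) t by simp
        hence "\<exists>G ai. fst G \<in> I \<times> J \<and> G \<in> ?FS (fst G) \<and> R' b G \<and>
          ai \<in> Ms (fst (fst G)) \<and> RM m ai \<and> y = snd G ai" by (simp only: S_def mem_Collect_eq)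
        then obtain G a where G: "fst G \<in> I \<times> J" "G \<in> ?FS (fst G)" "R' b G"
          "a \<in> Ms (fst (fst G))" "RM m a" "y = snd G a"
          by (elim exE conjE) auto
        have ap2: "approx_preserving I leI Ms trM J leJ Ns trN (fst (fst G2)) (snd (fst G2)) (snd G2)"
          using G2(2) by (simp add: fs_states_iff)
        have ap: "approx_preserving I leI Ms trM J leJ Ns trN (fst (fst G)) (snd (fst G)) (snd G)"
          using G(2) by (simp add: fs_states_iff)
        have "snd (fst G2) = j2"
          using sys_disj[OF syN _ j(2) ap_in[OF ap2 G2(4)]] G2 y by (auto simp: mem_Times_iff)
        have "snd (fst G) = j"
          using sys_disj[OF syN _ j(1) ap_in[OF ap G(4)]] G y by (auto simp: mem_Times_iff)
        define U where "U = {q \<in> I \<times> J. ?le (fst G) q \<and> ?le (fst G2) q}"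
        have "U \<in> FIJ"
        proof (rule ff_up[OF ffIJ])
          obtain i3 where "i3 \<in> I" "leI (fst (fst G)) i3" "leI (fst (fst G2)) i3"
            using dp_dir[OF dpI] G(1) G2(1) by (auto simp: mem_Times_iff)
          moreover obtain j3 where "j3 \<in> J" "leJ (snd (fst G)) j3" "leJ (snd (fst G2)) j3"
            using dp_dir[OF dpJ] G(1) G2(1) by (auto simp: mem_Times_iff)
          ultimately have "(i3, j3) \<in> U" unfolding U_def prod_le_def by auto
          thus "U \<noteq> {}" by blast
          show "upward_closed (I \<times> J) ?le U"
            unfolding upward_closed_def
          proof (intro conjI ballI impI)
            show "U \<subseteq> I \<times> J" unfolding U_def by blast
          next
            fix q q' assume q: "q \<in> U" "q' \<in> I \<times> J" "?le q q'"
            obtain x1 x2 where x: "fst G = (x1, x2)" "x1 \<in> I" "x2 \<in> J" using G(1) by (cases "fst G") auto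
            obtain z1 z2 where z: "fst G2 = (z1, z2)" "z1 \<in> I" "z2 \<in> J" using G2(1) by (cases "fst G2") auto
            obtain q1 q2 where qq: "q = (q1, q2)" "q1 \<in> I" "q2 \<in> J" using q(1) unfolding U_def by auto
            obtain r1 r2 where rr: "q' = (r1, r2)" "r1 \<in> I" "r2 \<in> J" using q(2) by auto
            have h: "leI x1 q1" "leJ x2 q2" "leI z1 q1" "leJ z2 q2" "leI q1 r1" "leJ q2 r2"
              using q x z qq rr unfolding U_def prod_le_def by auto
            have "leI x1 r1" "leI z1 r1" using dp_trans[OF dpI] h x z qq rr by blast+
            moreover have "leJ x2 r2" "leJ z2 r2" using dp_trans[OF dpJ] h x z qq rr by blast+
            ultimately show "q' \<in> U" unfolding U_def prod_le_def using x z rr by simp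
          qed
        qed
        hence "{j \<in> J. \<exists>i\<in>{i \<in> I. \<exists>a\<in>Ms i. RM m a}. (i, j) \<in> {p \<in> I \<times> J. \<exists>G\<in>?FS p. R' b G} \<inter> U} \<in> FJ"
          using D Ib Im ff_int[OF ffIJ] unfolding condition_D_def by blast
        then obtain j4 i4 a4 G4 where j4: "j4 \<in> J" "i4 \<in> I" "a4 \<in> Ms i4" "RM m a4" "G4 \<in> ?FS (i4, j4)"
          "R' b G4" "(i4, j4) \<in> U"
          using ff_nonempty[OF ffJ dp_ne[OF dpJ]] by blast
        have G4: "fst G4 = (i4, j4)" "approx_preserving I leI Ms trM J leJ Ns trN i4 j4 (snd G4)"
          using j4(5) by (auto simp: fs_states_iff)
        have le4: "?le (fst G) (i4, j4)" "?le (fst G2) (i4, j4)" using j4(7) unfolding U_def by auto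
        have "?FT G4 G" using target_coh[OF tg b _ _ le4(1) j4(5) G(2) j4(6) G(3)] G(1) j4 by auto
        moreover have "?FT G4 G2" using target_coh[OF tg b _ _ le4(2) j4(5) G2(2) j4(6) G2(3)] G2(1) j4 by auto
        moreover have "trM a4 a"
          using target_coh[OF tgM m _ j4(2) _ j4(3) G(4) j4(4) G(5)] G(1) le4(1)
          by (auto simp: prod_le_def mem_Times_iff)
        moreover have "trM a4 a2"
          using target_coh[OF tgM m _ j4(2) _ j4(3) G2(4) j4(4) G2(5)] G2(1) le4(2)
          by (auto simp: prod_le_def mem_Times_iff)
        ultimately have c: "trN (snd G4 a4) y" "trN (snd G4 a4) y2"
          unfolding fs_tr_def using G4 j4(3) G G2 by auto
        have "leJ j j4" "leJ j2 j4" using le4 \<open>snd (fst G) = j\<close> \<open>snd (fst G2) = j2\<close>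
          by (auto simp: prod_le_def)
        hence "sys_approx J leJ Ns trN y2 y"
          unfolding sys_approx_def using j j4(1) y c ap_in[OF G4(2) j4(3)] by blast
        thus "trN y2 y" using pf_iff[OF pfN j(1,2,3) y] by blast
      qed
    qed
    have ex1: "\<exists>!n. n \<in> TN \<and> (\<forall>j\<in>J. \<forall>y\<in>Ns j. y \<in> S b m \<longrightarrow> RN n y)" if "b \<in> T'" "m \<in> TM" for b m
      by (rule limit_point[OF limN Stg[OF that]])
    define \<Phi> where "\<Phi> = (\<lambda>b\<in>T'. \<lambda>m\<in>TM. THE n. n \<in> TN \<and> (\<forall>j\<in>J. \<forall>y\<in>Ns j. y \<in> S b m \<longrightarrow> RN n y))"
    have \<Phi>prop: "\<Phi> b m \<in> TN \<and> (\<forall>j\<in>J. \<forall>y\<in>Ns j. y \<in> S b m \<longrightarrow> RN (\<Phi> b m) y)"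
      if "b \<in> T'" "m \<in> TM" for b m
      unfolding \<Phi>_def using theI'[OF ex1[OF that]] that by simp
    have rel: "?FR (\<Phi> b) G" if "b \<in> T'" "p \<in> I \<times> J" "G \<in> ?FS p" "R' b G" for b p G
    proof -
      have G: "fst G = p" "approx_preserving I leI Ms trM J leJ Ns trN (fst p) (snd p) (snd G)"
        using that by (auto simp: fs_states_iff)
      show ?thesis unfolding funF_rel_def
      proof (intro conjI ballI impI)
        show "fst G \<in> I \<times> J" "G \<in> ?FS (fst G)" using G that by auto
      next
        fix m ai assume "m \<in> TM" "ai \<in> Ms (fst (fst G))" "RM m ai"
        moreover have "snd G ai \<in> S b m" unfolding S_def
          by (rule CollectI, rule exI[of _ G], rule exI[of _ ai]) (use that G \<open>ai \<in> _\<close> \<open>RM m ai\<close> in auto)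
        ultimately show "RN (\<Phi> b m) (snd G ai)"
          using \<Phi>prop[OF that(1)] ap_in[OF G(2)] G that(2) by (auto simp: mem_Times_iff)
      qed
    qed
    have inF: "\<Phi> b \<in> ?FF" if b: "b \<in> T'" for b
    proof -
      have "\<Phi> b \<in> TM \<rightarrow>\<^sub>E TN" using \<Phi>prop[OF b] b unfolding \<Phi>_def by auto
      moreover have "{p \<in> I \<times> J. \<exists>G\<in>?FS p. R' b G} \<in> FIJ" using target_idx[OF tg b] .
      moreover have "{p \<in> I \<times> J. \<exists>G\<in>?FS p. R' b G} \<subseteq> funF_index I leI Ms trM J leJ Ns trN TM RM RN (\<Phi> b)"
        unfolding funF_index_def using rel[OF b] by blast
      moreover have "funF_index I leI Ms trM J leJ Ns trN TM RM RN (\<Phi> b) \<subseteq> I \<times> J"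
        unfolding funF_index_def by blast
      ultimately show ?thesis unfolding funF_def using ff_super[OF ffIJ] by blast
    qed
    show "\<exists>!\<Phi>. \<Phi> \<in> T' \<rightarrow>\<^sub>E ?FF \<and> (\<forall>b\<in>T'. \<forall>p\<in>I \<times> J. \<forall>G\<in>?FS p. R' b G \<longrightarrow> ?FR (\<Phi> b) G)"
    proof (rule ex1I[of _ \<Phi>])
      show "\<Phi> \<in> T' \<rightarrow>\<^sub>E ?FF \<and> (\<forall>b\<in>T'. \<forall>p\<in>I \<times> J. \<forall>G\<in>?FS p. R' b G \<longrightarrow> ?FR (\<Phi> b) G)"
        using inF rel unfolding \<Phi>_def by auto
    next
      fix \<Psi> assume \<Psi>: "\<Psi> \<in> T' \<rightarrow>\<^sub>E ?FF \<and> (\<forall>b\<in>T'. \<forall>p\<in>I \<times> J. \<forall>G\<in>?FS p. R' b G \<longrightarrow> ?FR (\<Psi> b) G)"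
      show "\<Psi> = \<Phi>"
      proof
        fix b show "\<Psi> b = \<Phi> b"
        proof (cases "b \<in> T'")
          case False thus ?thesis using \<Psi> unfolding \<Phi>_def by (auto simp: PiE_def extensional_def)
        next
          case b: True
          have \<Psi>b: "\<Psi> b \<in> TM \<rightarrow>\<^sub>E TN" using \<Psi> b by (auto simp: funF_def)
          show ?thesis
          proof
            fix m show "\<Psi> b m = \<Phi> b m"
            proof (cases "m \<in> TM")
              case False thus ?thesis using \<Psi>b b unfolding \<Phi>_def by (auto simp: PiE_def extensional_def)
            next
              case m: True
              have "\<Psi> b m \<in> TN \<and> (\<forall>j\<in>J. \<forall>y\<in>Ns j. y \<in> S b m \<longrightarrow> RN (\<Psi> b m) y)"
              proof (intro conjI ballI impI)
                show "\<Psi> b m \<in> TN" using \<Psi>b m by auto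
              next
                fix j y assume "j \<in> J" "y \<in> Ns j" "y \<in> S b m"
                then obtain G ai where G: "fst G \<in> I \<times> J" "G \<in> ?FS (fst G)" "R' b G"
                  "ai \<in> Ms (fst (fst G))" "RM m ai" "y = snd G ai" unfolding S_def mem_Collect_eq by (elim exE conjE) auto
                have "?FR (\<Psi> b) G" using conjunct2[OF \<Psi>, rule_format, OF b G(1) G(2) G(3)] .
                thus "RN (\<Psi> b m) y" using G m unfolding funF_rel_def by blast
              qed
              thus ?thesis using ex1[OF b m] \<Phi>prop[OF b m] by blast
            qed
          qed
        qed
      qed
    qed
  qed
qed

end
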